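(* Let $m_1,m_2,m_3>0$, let $\alpha_{ij},\beta_{ij}>0$ for $1\le i<j\le 3$, and let $a,b\in\mathbb{R}$ with $4<a<b-1$. Consider the Hamiltonian system $\dot{\mathbf q}=M^{-1}\mathbf p$, $\dot{\mathbf p}=-\nabla W(\mathbf q)$ on $(\mathbb{R}^3\setminus\Delta)\times\mathbb{R}^3$. Then no solution of this system has a singularity. That is, if $(\mathbf q(t),\mathbf p(t))$ is a solution with initial data in $(\mathbb{R}^3\setminus\Delta)\times\mathbb{R}^3$, defined on a maximal interval $[0,t^* )$, then $t^*=\infty$. In particular, no double or triple collisions occur in finite time. The analogous statement holds for backward time.
   Context: Three point masses $m_1,m_2,m_3$ move on a line with positions $\mathbf q=(q_1,q_2,q_3)$ and momenta $\mathbf p=(p_1,p_2,p_3)$. Let $M=\mathrm{diag}(m_1,m_2,m_3)$. The Hamiltonian is $H(\mathbf q,\mathbf p)=\tfrac12\mathbf p^TM^{-1}\mathbf p+W(\mathbf q)$, where $W=-U+V$ with $$U(\mathbf q)=\sum_{1\le i<j\le3}\frac{\alpha_{ij}}{|q_i-q_j|^{a}},\qquad V(\mathbf q)=\sum_{1\le i<j\le3}\frac{\beta_{ij}}{|q_i-q_j|^{b}}.$$ The collision set is $\Delta=\{\mathbf q\in\mathbb{R}^3: q_1=q_2\text{ or }q_2=q_3\text{ or }q_1=q_3\}$. *)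

theory Defs
  imports "HOL-Analysis.Analysis"
begin

definition pair_pot :: "real \<Rightarrow> real \<Rightarrow> real \<Rightarrow> real \<Rightarrow> real^3 \<Rightarrow> real" where
  "pair_pot c12 c13 c23 e q =
     c12 / \<bar>q$1 - q$2\<bar> powr e + c13 / \<bar>q$1 - q$3\<bar> powr e + c23 / \<bar>q$2 - q$3\<bar> powr e"

definition Wpot :: "real \<Rightarrow> real \<Rightarrow> real \<Rightarrow> real \<Rightarrow> real \<Rightarrow> real \<Rightarrow> real \<Rightarrow> real \<Rightarrow> real^3 \<Rightarrow> real" where
  "Wpot a12 a13 a23 b12 b13 b23 a b q = - pair_pot a12 a13 a23 a q + pair_pot b12 b13 b23 b q"

definition collision_set :: "(real^3) set" where
  "collision_set = {q. q$1 = q$2 \<or> q$2 = q$3 \<or> q$1 = q$3}"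

text \<open>Gradient of a real function on real^3 at x (well defined where the function is differentiable).\<close>
definition grad :: "(real^3 \<Rightarrow> real) \<Rightarrow> real^3 \<Rightarrow> real^3" where
  "grad f x = (THE D. GDERIV f x :> D)"

definition is_solution ::
  "real^3 \<Rightarrow> (real^3 \<Rightarrow> real) \<Rightarrow> real set \<Rightarrow> (real \<Rightarrow> real^3) \<Rightarrow> (real \<Rightarrow> real^3) \<Rightarrow> bool" where
  "is_solution m W I q p \<longleftrightarrow>
     (\<forall>t\<in>I. q t \<notin> collision_set \<and>
        (q has_vector_derivative (\<chi> i. p t $ i / m $ i)) (at t within I) \<and>
        (p has_vector_derivative (- grad W (q t))) (at t within I))"

end

theory Submission
  imports Defs
begin


lemma picard_global:
  fixes g :: "'a::euclidean_space \<Rightarrow> 'a"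
  assumes lip: "\<And>x y. norm (g x - g y) \<le> L * norm (x - y)"
    and bnd: "\<And>x. norm (g x) \<le> B"
    and h: "h > 0" "h * L < 1" "L \<ge> 0"
  shows "\<exists>y. continuous_on {t0..t0+h} y \<and>
     (\<forall>t\<in>{t0..t0+h}. y t = x0 + integral {t0..t} (\<lambda>s. g (y s)))"
proof -
  define cl where "cl t = max t0 (min (t0+h) t)" for t
  have cl_in: "cl t \<in> {t0..t0+h}" for t using h by (auto simp: cl_def)
  have cl_id: "t \<in> {t0..t0+h} \<Longrightarrow> cl t = t" for t by (auto simp: cl_def)
  have cont_cl: "continuous_on UNIV cl" unfolding cl_def by (intro continuous_intros)
  have B0: "0 \<le> B" using bnd[of 0] norm_ge_zero order_trans by blast
  have gcont: "continuous_on S g" for S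
  proof (rule continuous_onI)
    fix x e assume "x \<in> S" "(e::real) > 0"
    show "\<exists>d>0. \<forall>x'\<in>S. dist x' x < d \<longrightarrow> dist (g x') (g x) \<le> e"
    proof (intro exI[of _ "e/(L+1)"] conjI ballI impI)
      show "e/(L+1) > 0" using \<open>e>0\<close> h by auto
      fix x' assume "x' \<in> S" "dist x' x < e/(L+1)"
      hence "(L+1) * dist x' x \<le> e" using h by (simp add: field_simps)
      moreover have "dist (g x') (g x) \<le> L * dist x' x" using lip by (simp add: dist_norm)
      moreover have "L * dist x' x \<le> (L+1) * dist x' x" by (simp add: distrib_right)
      ultimately show "dist (g x') (g x) \<le> e" by linarith
    qed
  qed
  define F where "F y t = x0 + integral {t0..cl t} (\<lambda>s. g (apply_bcontfun y s))" for y :: "real \<Rightarrow>\<^sub>C 'a" and t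
  have Fbc: "F y \<in> bcontfun" for y
  proof -
    have c1: "continuous_on {t0..t0+h} (\<lambda>s. g (apply_bcontfun y s))"
      by (intro continuous_on_compose2[OF gcont[of UNIV]]) auto
    have "continuous_on {t0..t0+h} (\<lambda>u. integral {t0..u} (\<lambda>s. g (apply_bcontfun y s)))"
      using integral_has_vector_derivative[OF c1]
      by (meson has_vector_derivative_continuous continuous_on_eq_continuous_within)
    hence c2: "continuous_on UNIV (F y)" unfolding F_def
      by (intro continuous_intros continuous_on_compose2[OF _ cont_cl]) (use cl_in in auto)
    have "norm (F y t) \<le> norm x0 + B * h" for t
    proof -
      have int: "((\<lambda>s. g (apply_bcontfun y s)) has_integral integral {t0..cl t} (\<lambda>s. g (apply_bcontfun y s))) (cbox t0 (cl t))"
        using c1 cl_in[of t] by (auto intro!: integrable_integral integrable_continuous_real continuous_on_subset[OF c1])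
      have "norm (integral {t0..cl t} (\<lambda>s. g (apply_bcontfun y s))) \<le> B * Henstock_Kurzweil_Integration.content (cbox t0 (cl t))"
        by (rule has_integral_bound[OF B0 int]) (simp add: bnd)
      also have "\<dots> \<le> B * h" using cl_in[of t] B0 by (auto intro!: mult_left_mono)
      finally show ?thesis unfolding F_def using norm_triangle_ineq[of x0 "integral {t0..cl t} (\<lambda>s. g (apply_bcontfun y s))"] by linarith
    qed
    hence "bounded (range (F y))" by (auto simp: bounded_iff)
    with c2 show ?thesis by (simp add: bcontfun_def)
  qed
  define \<Phi> where "\<Phi> y = Bcontfun (F y)" for y
  have Phi_app: "apply_bcontfun (\<Phi> y) t = F y t" for y t
    using Fbc by (simp add: \<Phi>_def Bcontfun_inverse)
  have contr: "dist (\<Phi> y) (\<Phi> z) \<le> (h*L) * dist y z" for y z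
  proof (rule dist_bound)
    fix t
    have c1: "continuous_on {t0..t0+h} (\<lambda>s. g (apply_bcontfun y s))" for y
      by (intro continuous_on_compose2[OF gcont[of UNIV]]) auto
    have int: "((\<lambda>s. g (apply_bcontfun y s) - g (apply_bcontfun z s)) has_integral
       integral {t0..cl t} (\<lambda>s. g (apply_bcontfun y s)) - integral {t0..cl t} (\<lambda>s. g (apply_bcontfun z s))) (cbox t0 (cl t))"
      using cl_in[of t] by (auto intro!: has_integral_diff integrable_integral integrable_continuous_real continuous_on_subset[OF c1])
    have "norm (integral {t0..cl t} (\<lambda>s. g (apply_bcontfun y s)) - integral {t0..cl t} (\<lambda>s. g (apply_bcontfun z s)))
       \<le> (L * dist y z) * Henstock_Kurzweil_Integration.content (cbox t0 (cl t))"
    proof (rule has_integral_bound[OF _ int])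
      show "0 \<le> L * dist y z" using h by simp
      fix s show "norm (g (apply_bcontfun y s) - g (apply_bcontfun z s)) \<le> L * dist y z"
        using lip[of "apply_bcontfun y s" "apply_bcontfun z s"] dist_bounded[of y s z] h
        by (metis dist_norm mult_left_mono order_trans)
    qed
    also have "\<dots> \<le> (L * dist y z) * h" using cl_in[of t] h by (auto intro!: mult_left_mono)
    finally show "dist (apply_bcontfun (\<Phi> y) t) (apply_bcontfun (\<Phi> z) t) \<le> h * L * dist y z"
      by (simp add: Phi_app F_def dist_norm algebra_simps)
  qed
  obtain y where y: "\<Phi> y = y"
    using banach_fix_type[of "h*L" \<Phi>] contr h by auto
  show ?thesis
  proof (intro exI[of _ "apply_bcontfun y"] conjI ballI)
    show "continuous_on {t0..t0+h} (apply_bcontfun y)" by simp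
    fix t assume "t \<in> {t0..t0+h}"
    then show "apply_bcontfun y t = x0 + integral {t0..t} (\<lambda>s. g (apply_bcontfun y s))"
      using Phi_app[of y t] y by (simp add: F_def cl_id)
  qed
qed



definition psi :: "real \<Rightarrow> real \<Rightarrow> real" where
  "psi e d = sgn d * \<bar>d\<bar> powr (-(e+1))"

definition dpair :: "real \<Rightarrow> real \<Rightarrow> real \<Rightarrow> real" where
  "dpair c e d = - e * c * psi e d"

definition GPP :: "real \<Rightarrow> real \<Rightarrow> real \<Rightarrow> real \<Rightarrow> real^3 \<Rightarrow> real^3" where
  "GPP c12 c13 c23 e q =
     dpair c12 e (q$1 - q$2) *\<^sub>R (axis 1 1 - axis 2 1)
   + dpair c13 e (q$1 - q$3) *\<^sub>R (axis 1 1 - axis 3 1)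
   + dpair c23 e (q$2 - q$3) *\<^sub>R (axis 2 1 - axis 3 1)"

lemma deriv_pair:
  assumes "d \<noteq> 0"
  shows "DERIV (\<lambda>x. c / \<bar>x\<bar> powr e) d :> dpair c e d"
proof (cases "d > 0")
  case True
  have ev: "eventually (\<lambda>x. c * x powr (-e) = c / \<bar>x\<bar> powr e) (nhds d)"
  proof -
    have "eventually (\<lambda>x. x > 0) (nhds d)" by (rule order_tendstoD(1)[OF filterlim_ident True])
    then show ?thesis by eventually_elim (simp add: powr_minus_divide)
  qed
  have "DERIV (\<lambda>x. c * x powr (-e)) d :> c * (-e * d powr (-e - 1))"
    by (intro DERIV_cmult has_real_derivative_powr True)
  moreover have "c * (-e * d powr (-e - 1)) = dpair c e d"
    using True by (simp add: dpair_def psi_def)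
  ultimately show ?thesis using DERIV_cong_ev[OF refl ev refl] by simp
next
  case False
  hence neg: "d < 0" using assms by simp
  have ev: "eventually (\<lambda>x. c * (-x) powr (-e) = c / \<bar>x\<bar> powr e) (nhds d)"
  proof -
    have "eventually (\<lambda>x. x < 0) (nhds d)" by (rule order_tendstoD(2)[OF filterlim_ident neg])
    then show ?thesis by eventually_elim (simp add: powr_minus_divide)
  qed
  have "DERIV (\<lambda>x. c * (-x) powr (-e)) d :> c * ((-e * (-d) powr (-e - 1)) * (-1))"
    using neg by (intro DERIV_cmult DERIV_chain2[OF has_real_derivative_powr]) (auto intro!: derivative_eq_intros)
  moreover have "c * ((-e * (-d) powr (-e - 1)) * (-1)) = dpair c e d"
    using neg by (simp add: dpair_def psi_def)
  ultimately show ?thesis using DERIV_cong_ev[OF refl ev refl] by simp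
qed

lemma gderiv_nth: "GDERIV (\<lambda>q::real^3. q$i) q :> axis i 1"
  unfolding gderiv_def
  by (rule has_derivative_eq_rhs[OF bounded_linear.has_derivative[OF bounded_linear_vec_nth]])
     (auto simp: inner_axis)

lemma gderiv_pair_pot:
  assumes "q \<notin> collision_set"
  shows "GDERIV (pair_pot c12 c13 c23 e) q :> GPP c12 c13 c23 e q"
proof -
  have ne: "q$1 - q$2 \<noteq> 0" "q$1 - q$3 \<noteq> 0" "q$2 - q$3 \<noteq> 0"
    using assms by (auto simp: collision_set_def)
  have t: "GDERIV (\<lambda>q::real^3. c / \<bar>q$i - q$j\<bar> powr e) q :> dpair c e (q$i - q$j) *\<^sub>R (axis i 1 - axis j 1)"
    if "q$i - q$j \<noteq> 0" for c i j
    using GDERIV_DERIV_compose[OF GDERIV_diff[OF gderiv_nth gderiv_nth] deriv_pair[OF that]] .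
  have "GDERIV (\<lambda>q. c12 / \<bar>q$1 - q$2\<bar> powr e + c13 / \<bar>q$1 - q$3\<bar> powr e + c23 / \<bar>q$2 - q$3\<bar> powr e) q :> GPP c12 c13 c23 e q"
    unfolding GPP_def by (intro GDERIV_add t ne)
  then show ?thesis by (simp add: pair_pot_def[abs_def])
qed

definition GW :: "real \<Rightarrow> real \<Rightarrow> real \<Rightarrow> real \<Rightarrow> real \<Rightarrow> real \<Rightarrow> real \<Rightarrow> real \<Rightarrow> real^3 \<Rightarrow> real^3" where
  "GW a12 a13 a23 b12 b13 b23 a b q = - GPP a12 a13 a23 a q + GPP b12 b13 b23 b q"

lemma gderiv_W:
  assumes "q \<notin> collision_set"
  shows "GDERIV (Wpot a12 a13 a23 b12 b13 b23 a b) q :> GW a12 a13 a23 b12 b13 b23 a b q"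
  unfolding Wpot_def[abs_def] GW_def
  by (intro GDERIV_add GDERIV_minus gderiv_pair_pot assms)

lemma gderiv_unique:
  assumes "GDERIV f x :> D" "GDERIV f x :> D'"
  shows "D = D'"
proof -
  have "(\<lambda>h. inner h D) = (\<lambda>h. inner h D')"
    using assms unfolding gderiv_def by (rule has_derivative_unique)
  hence "inner (D - D') D = inner (D - D') D'" by metis
  hence "inner (D - D') (D - D') = 0" by (simp add: inner_diff_right)
  thus ?thesis by simp
qed

lemma grad_W:
  assumes "q \<notin> collision_set"
  shows "grad (Wpot a12 a13 a23 b12 b13 b23 a b) q = GW a12 a13 a23 b12 b13 b23 a b q"
  unfolding grad_def using gderiv_W[OF assms] gderiv_unique by blast



lemma powr_lip_neg:
  fixes k x y dl :: real
  assumes "k < 0" "0 < dl" "dl \<le> x" "x \<le> y"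
  shows "\<bar>x powr k - y powr k\<bar> \<le> (-k) * dl powr (k-1) * (y - x)"
proof (cases "x = y")
  case True then show ?thesis by simp
next
  case False
  hence xy: "x < y" using assms by simp
  have "\<exists>z>x. z < y \<and> y powr k - x powr k = (y - x) * (k * z powr (k - 1))"
    by (rule MVT2[OF xy]) (use assms in \<open>auto intro!: has_real_derivative_powr\<close>)
  then obtain z where z: "x < z" "z < y" "y powr k - x powr k = (y - x) * (k * z powr (k - 1))"
    by blast
  have "z powr (k-1) \<le> dl powr (k-1)"
    using z assms by (intro powr_mono2') auto
  have eq: "x powr k - y powr k = (y - x) * ((-k) * z powr (k-1))" using z(3) by (simp add: algebra_simps)
  have nn: "0 \<le> (y - x) * ((-k) * z powr (k-1))" using xy assms by (intro mult_nonneg_nonneg) auto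
  have "\<bar>x powr k - y powr k\<bar> = (y - x) * ((-k) * z powr (k-1))"
    using eq nn by simp
  also have "\<dots> \<le> (y - x) * ((-k) * dl powr (k-1))"
    using \<open>z powr (k-1) \<le> dl powr (k-1)\<close> xy assms by (intro mult_left_mono) auto
  finally show ?thesis by (simp add: algebra_simps)
qed

lemma psi_bound:
  assumes "e > 0" "dl > 0" "dl \<le> \<bar>d\<bar>"
  shows "\<bar>psi e d\<bar> \<le> dl powr (-(e+1))"
proof -
  have "\<bar>d\<bar> powr (-(e+1)) \<le> dl powr (-(e+1))"
    using assms by (intro powr_mono2') auto
  then show ?thesis unfolding psi_def by (auto simp: abs_mult sgn_if)
qed

lemma psi_lip:
  assumes e: "e > 0" and dl: "dl > 0" and d: "dl \<le> \<bar>d\<bar>" and d': "dl \<le> \<bar>d'\<bar>"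
  shows "\<bar>psi e d - psi e d'\<bar> \<le> (e+1) * dl powr (-(e+2)) * \<bar>d - d'\<bar>"
proof -
  have k: "-(e+1) - 1 = -(e+2)" by simp
  have pos: "\<bar>x powr (-(e+1)) - y powr (-(e+1))\<bar> \<le> (e+1) * dl powr (-(e+2)) * \<bar>x - y\<bar>"
    if "dl \<le> x" "dl \<le> y" for x y
  proof (cases "x \<le> y")
    case True
    then show ?thesis using powr_lip_neg[of "-(e+1)" dl x y] that e dl k by (simp add: algebra_simps)
  next
    case False
    then show ?thesis using powr_lip_neg[of "-(e+1)" dl y x] that e dl k
      by (simp add: abs_minus_commute algebra_simps)
  qed
  have dd: "dl powr (-(e+2)) * dl = dl powr (-(e+1))"
  proof -
    have "dl powr (-(e+2)) * dl powr 1 = dl powr (-(e+2) + 1)" by (simp only: powr_add)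
    moreover have "-(e+2) + 1 = -(e+1)" by simp
    moreover have "dl powr 1 = dl" using dl by simp
    ultimately show ?thesis by metis
  qed
  have Kpos: "0 \<le> (e+1) * dl powr (-(e+2))" using e by simp
  show ?thesis
  proof (cases "(d > 0 \<and> d' > 0) \<or> (d < 0 \<and> d' < 0)")
    case True
    then show ?thesis
    proof
      assume "d > 0 \<and> d' > 0" then show ?thesis using pos[of d d'] d d' by (simp add: psi_def)
    next
      assume "d < 0 \<and> d' < 0"
      then show ?thesis using pos[of "-d" "-d'"] d d'
        by (simp add: psi_def abs_minus_commute)
    qed
  next
    case False
    have nz: "d \<noteq> 0" "d' \<noteq> 0" using d d' dl by auto
    hence far: "2 * dl \<le> \<bar>d - d'\<bar>" using False d d' by auto
    have "\<bar>psi e d - psi e d'\<bar> \<le> \<bar>psi e d\<bar> + \<bar>psi e d'\<bar>" by simp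
    also have "\<dots> \<le> 2 * dl powr (-(e+1))" using psi_bound[OF e dl d] psi_bound[OF e dl d'] by simp
    also have "\<dots> = dl powr (-(e+2)) * (2 * dl)" using dd by simp
    also have "\<dots> \<le> (e+1) * dl powr (-(e+2)) * (2*dl)"
      using e dl by (intro mult_right_mono) auto
    also have "\<dots> \<le> (e+1) * dl powr (-(e+2)) * \<bar>d - d'\<bar>"
      using far Kpos by (intro mult_left_mono) auto
    finally show ?thesis .
  qed
qed

definition Rg :: "real \<Rightarrow> (real^3) set" where
  "Rg dl = {q. dl \<le> \<bar>q$1 - q$2\<bar> \<and> dl \<le> \<bar>q$1 - q$3\<bar> \<and> dl \<le> \<bar>q$2 - q$3\<bar>}"

lemma norm_axis_diff: "norm (axis i 1 - axis j (1::real) :: real^3) \<le> 2"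
  using norm_triangle_ineq4[of "axis i (1::real) :: real^3" "axis j 1"] by simp

lemma comp_diff_le: "\<bar>(q$i - q$j) - (q'$i - q'$j)\<bar> \<le> 2 * norm (q - q' :: real^3)"
proof -
  have "\<bar>(q$i - q$j) - (q'$i - q'$j)\<bar> \<le> \<bar>(q - q')$i\<bar> + \<bar>(q - q')$j\<bar>" by simp
  also have "\<dots> \<le> 2 * norm (q - q')" using component_le_norm_cart[of "q-q'" i] component_le_norm_cart[of "q-q'" j] by simp
  finally show ?thesis .
qed

lemma term_lip:
  assumes e: "e > 0" and dl: "dl > 0" and c: "c \<ge> 0"
    and d: "dl \<le> \<bar>q$i - q$j\<bar>" and d': "dl \<le> \<bar>q'$i - q'$j\<bar>"
  shows "norm (dpair c e (q$i - q$j) *\<^sub>R (axis i 1 - axis j 1) - dpair c e (q'$i - q'$j) *\<^sub>R (axis i 1 - axis j 1 :: real^3))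
     \<le> (4 * e * c * ((e+1) * dl powr (-(e+2)))) * norm (q - q' :: real^3)"
proof -
  have "norm (dpair c e (q$i - q$j) *\<^sub>R (axis i 1 - axis j 1) - dpair c e (q'$i - q'$j) *\<^sub>R (axis i 1 - axis j 1 :: real^3))
     = \<bar>dpair c e (q$i - q$j) - dpair c e (q'$i - q'$j)\<bar> * norm (axis i 1 - axis j 1 :: real^3)"
    (is "?L = _") by (simp only: scaleR_diff_left[symmetric] norm_scaleR)
  also have "\<dots> \<le> \<bar>dpair c e (q$i - q$j) - dpair c e (q'$i - q'$j)\<bar> * 2"
    by (intro mult_left_mono norm_axis_diff) auto
  also have "\<dots> = e * c * \<bar>psi e (q$i - q$j) - psi e (q'$i - q'$j)\<bar> * 2"
    using e c by (simp add: dpair_def abs_mult right_diff_distrib[symmetric] abs_minus_commute)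
  also have "\<dots> \<le> e * c * ((e+1) * dl powr (-(e+2)) * \<bar>(q$i - q$j) - (q'$i - q'$j)\<bar>) * 2"
    using e c by (intro mult_right_mono mult_left_mono psi_lip[OF e dl d d']) auto
  also have "\<dots> \<le> e * c * ((e+1) * dl powr (-(e+2)) * (2 * norm (q - q'))) * 2"
    using e c by (intro mult_right_mono mult_left_mono comp_diff_le) auto
  finally have "?L \<le> e * c * ((e+1) * dl powr (-(e+2)) * (2 * norm (q - q'))) * 2" .
  moreover have "e * c * ((e+1) * dl powr (-(e+2)) * (2 * norm (q - q'))) * 2 = (4 * e * c * ((e+1) * dl powr (-(e+2)))) * norm (q - q')"
    by (simp add: algebra_simps)
  ultimately show ?thesis by linarith
qed

lemma term_bound:
  assumes e: "e > 0" and dl: "dl > 0" and c: "c \<ge> 0" and d: "dl \<le> \<bar>q$i - q$j\<bar>"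
  shows "norm (dpair c e (q$i - q$j) *\<^sub>R (axis i 1 - axis j 1 :: real^3)) \<le> 2 * e * c * dl powr (-(e+1))"
proof -
  have "norm (dpair c e (q$i - q$j) *\<^sub>R (axis i 1 - axis j 1 :: real^3)) = \<bar>dpair c e (q$i - q$j)\<bar> * norm (axis i 1 - axis j 1 :: real^3)"
    by simp
  also have "\<dots> \<le> \<bar>dpair c e (q$i - q$j)\<bar> * 2" by (intro mult_left_mono norm_axis_diff) auto
  also have "\<dots> = e * c * \<bar>psi e (q$i - q$j)\<bar> * 2" using e c by (simp add: dpair_def abs_mult)
  also have "\<dots> \<le> e * c * dl powr (-(e+1)) * 2" using e c by (intro mult_right_mono mult_left_mono psi_bound[OF e dl d]) auto
  finally show ?thesis by (simp add: algebra_simps)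
qed

lemma GPP_lip:
  assumes e: "e > 0" and dl: "dl > 0" and c: "c12 \<ge> 0" "c13 \<ge> 0" "c23 \<ge> 0"
    and q: "q \<in> Rg dl" and q': "q' \<in> Rg dl"
  shows "norm (GPP c12 c13 c23 e q - GPP c12 c13 c23 e q') \<le>
     (4 * e * (c12+c13+c23) * ((e+1) * dl powr (-(e+2)))) * norm (q - q')"
proof -
  let ?K = "(e+1) * dl powr (-(e+2))"
  have "GPP c12 c13 c23 e q - GPP c12 c13 c23 e q' =
     (dpair c12 e (q$1 - q$2) *\<^sub>R (axis 1 1 - axis 2 1) - dpair c12 e (q'$1 - q'$2) *\<^sub>R (axis 1 1 - axis 2 1))
   + (dpair c13 e (q$1 - q$3) *\<^sub>R (axis 1 1 - axis 3 1) - dpair c13 e (q'$1 - q'$3) *\<^sub>R (axis 1 1 - axis 3 1))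
   + (dpair c23 e (q$2 - q$3) *\<^sub>R (axis 2 1 - axis 3 1) - dpair c23 e (q'$2 - q'$3) *\<^sub>R (axis 2 1 - axis 3 1))"
    by (simp add: GPP_def algebra_simps)
  also have "norm \<dots> \<le> (4 * e * c12 * ?K) * norm (q - q') + (4 * e * c13 * ?K) * norm (q - q') + (4 * e * c23 * ?K) * norm (q - q')"
    using q q' by (intro norm_triangle_le add_mono term_lip e dl c) (auto simp: Rg_def)
  finally show ?thesis by (simp add: algebra_simps)
qed

lemma GPP_bound:
  assumes e: "e > 0" and dl: "dl > 0" and c: "c12 \<ge> 0" "c13 \<ge> 0" "c23 \<ge> 0"
    and q: "q \<in> Rg dl"
  shows "norm (GPP c12 c13 c23 e q) \<le> 2 * e * (c12+c13+c23) * dl powr (-(e+1))"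
proof -
  have "norm (GPP c12 c13 c23 e q) \<le> 2 * e * c12 * dl powr (-(e+1)) + 2 * e * c13 * dl powr (-(e+1)) + 2 * e * c23 * dl powr (-(e+1))"
    unfolding GPP_def using q by (intro norm_triangle_le add_mono term_bound e dl c) (auto simp: Rg_def)
  thus ?thesis by (simp add: algebra_simps)
qed



definition hfun :: "real \<Rightarrow> real \<Rightarrow> real \<Rightarrow> real \<Rightarrow> real \<Rightarrow> real" where
  "hfun al be a b r = - al / r powr a + be / r powr b"

lemma hx_aux1: "(be::real) > 0 \<Longrightarrow> al > 0 \<Longrightarrow> x > 0 \<Longrightarrow> be / (x * (be/(2*al))) = 2*al/x"
  by (simp add: field_simps)

lemma hx_aux2: "(al::real) > 0 \<Longrightarrow> x > 0 \<Longrightarrow> cc > 0 \<Longrightarrow> al/x \<le> cc \<Longrightarrow> al/cc \<le> x"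
  by (simp add: field_simps)

lemma hx_aux3: "2*(al::real)/x \<le> y \<Longrightarrow> al/x \<le> -al/x + y"
proof -
  assume "2*al/x \<le> y"
  moreover have "-al/x = -(al/x)" "2*al/x = 2*(al/x)" by simp_all
  ultimately show ?thesis by linarith
qed

lemma hfun_core:
  assumes a: "0 < a" "a < b" and al: "al > 0" and be: "be > 0"
  defines "rho \<equiv> (be / (2*al)) powr (1/(b-a))"
  shows "rho > 0" and "\<And>r. 0 < r \<Longrightarrow> r \<le> rho \<Longrightarrow> al / r powr a \<le> hfun al be a b r"
    and "\<And>r. rho \<le> r \<Longrightarrow> - (al / rho powr a) \<le> hfun al be a b r"
proof -
  show rp: "rho > 0" using al be by (simp add: rho_def)
  fix r :: real
  {
    assume r: "0 < r" "r \<le> rho"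
    have "r powr (b-a) \<le> rho powr (b-a)" using r a by (intro powr_mono2) auto
    also have "\<dots> = be / (2*al)" using al be a by (simp add: rho_def powr_powr)
    finally have rb: "r powr (b-a) \<le> be / (2*al)" .
    have rpa: "r powr a > 0" "r powr (b-a) > 0" using r by auto
    have "r powr b = r powr a * r powr (b-a)" by (simp add: powr_add[symmetric])
    hence "be / r powr b = be / (r powr a * r powr (b-a))" by simp
    also have "\<dots> \<ge> be / (r powr a * (be / (2*al)))"
      using rpa rb be al by (intro divide_left_mono mult_left_mono mult_pos_pos) auto
    also have "be / (r powr a * (be / (2*al))) = 2 * al / r powr a" using hx_aux1[of be al "r powr a"] be al rpa by simp
    finally show "al / r powr a \<le> hfun al be a b r" unfolding hfun_def by (rule hx_aux3)
  next
    assume r: "rho \<le> r"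
    hence r0: "r > 0" using rp by simp
    have "rho powr a \<le> r powr a" using r rp a by (intro powr_mono2) auto
    hence "al / r powr a \<le> al / rho powr a" using al rp r0 by (intro divide_left_mono mult_pos_pos) auto
    moreover have "be / r powr b \<ge> 0" using be by simp
    ultimately show "- (al / rho powr a) \<le> hfun al be a b r" unfolding hfun_def by simp
  }
qed

lemma hfun_lower:
  assumes "0 < a" "a < b" "al > 0" "be > 0"
  shows "\<exists>K. \<forall>r>0. - K \<le> hfun al be a b r"
proof -
  define rho where "rho = (be / (2*al)) powr (1/(b-a))"
  note h = hfun_core[OF assms, folded rho_def]
  show ?thesis
  proof (intro exI allI impI)
    fix r :: real assume r: "r > 0"
    show "- (al / rho powr a) \<le> hfun al be a b r"
    proof (cases "r \<le> rho")
      case True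
      have "0 \<le> al / r powr a" using assms by simp
      moreover have "0 \<le> al / rho powr a" using assms h(1) by simp
      ultimately show ?thesis using h(2)[OF r True] by linarith
    next
      case False then show ?thesis using h(3) by simp
    qed
  qed
qed

lemma hfun_gap:
  assumes a: "0 < a" "a < b" and al: "al > 0" and be: "be > 0"
  shows "\<exists>dl>0. \<forall>r>0. hfun al be a b r \<le> C \<longrightarrow> dl \<le> r"
proof -
  define rho where "rho = (be / (2*al)) powr (1/(b-a))"
  note h = hfun_core[OF assms, folded rho_def]
  define C' where "C' = max C 1"
  define X where "X = (al/C') powr (1/a)"
  define dl where "dl = min rho X"
  have C': "C' > 0" "C \<le> C'" unfolding C'_def by linarith+
  have X: "X > 0" unfolding X_def using al C' by simp
  show ?thesis
  proof (intro exI conjI allI impI)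
    show "dl > 0" unfolding dl_def using h(1) X by linarith
    fix r :: real assume r: "r > 0" "hfun al be a b r \<le> C"
    show "dl \<le> r"
    proof (cases "r \<le> rho")
      case False then show ?thesis unfolding dl_def by linarith
    next
      case True
      have "al / r powr a \<le> C'" using h(2)[OF r(1) True] r(2) C' by linarith
      hence "al / C' \<le> r powr a" using hx_aux2[of al "r powr a" C'] C' r al by simp
      hence "X \<le> (r powr a) powr (1/a)" unfolding X_def using al C' a by (intro powr_mono2) auto
      also have "(r powr a) powr (1/a) = r powr (a * (1/a))" by (rule powr_powr)
      also have "a * (1/a) = 1" using a by simp
      also have "r powr 1 = r" using r by simp
      finally show ?thesis unfolding dl_def by linarith
    qed
  qed
qed

definition vel :: "real^3 \<Rightarrow> real^3 \<Rightarrow> real^3" where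
  "vel m p = (\<chi> i. p$i / m$i)"

definition KE :: "real^3 \<Rightarrow> real^3 \<Rightarrow> real" where
  "KE m p = (\<Sum>i\<in>UNIV. (p$i)^2 / (2 * m$i))"

lemma vel_diff: "vel m p - vel m p' = vel m (p - p')"
  by (simp add: vel_def vec_eq_iff diff_divide_distrib)

lemma vel_bound:
  assumes "\<forall>i. m$i > 0"
  shows "norm (vel m p) \<le> (\<Sum>i\<in>UNIV. 1 / m$i) * norm p"
proof -
  have "norm (vel m p) \<le> (\<Sum>i\<in>UNIV. \<bar>vel m p $ i\<bar>)" by (rule norm_le_l1_cart)
  also have "\<dots> \<le> (\<Sum>i\<in>UNIV. (1 / m$i) * norm p)"
  proof (rule sum_mono)
    fix i
    have mi: "m$i > 0" using assms by blast
    have "\<bar>vel m p $ i\<bar> = \<bar>p$i\<bar> / m$i" using mi unfolding vel_def by (simp add: abs_divide)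
    also have "\<dots> \<le> norm p / m$i" using mi component_le_norm_cart[of p i] by (simp add: divide_right_mono)
    finally show "\<bar>vel m p $ i\<bar> \<le> (1 / m$i) * norm p" by simp
  qed
  also have "\<dots> = (\<Sum>i\<in>UNIV. 1 / m$i) * norm p" by (rule sum_distrib_right[symmetric])
  finally show ?thesis .
qed

lemma gderiv_KE:
  assumes m: "\<forall>i. m$i > 0"
  shows "GDERIV (KE m) p :> vel m p"
proof -
  have vn: "((\<lambda>p::real^3. p$i) has_derivative (\<lambda>h. h$i)) (at p)" for i
    by (rule bounded_linear_imp_has_derivative) (rule bounded_linear_vec_nth)
  have t: "((\<lambda>p::real^3. (p$i)^2 / (2 * m$i)) has_derivative (\<lambda>h. h$i * (p$i / m$i))) (at p)" for i
  proof -
    have "((\<lambda>p::real^3. (p$i * p$i) * (1 / (2 * m$i))) has_derivative (\<lambda>h. (p$i * h$i + h$i * p$i) * (1 / (2 * m$i)))) (at p)"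
      by (intro has_derivative_mult_left has_derivative_mult vn)
    moreover have "(\<lambda>h. (p$i * h$i + h$i * p$i) * (1 / (2 * m$i))) = (\<lambda>h. h$i * (p$i / m$i))"
      using m by (auto simp: field_simps)
    ultimately show ?thesis by (simp add: power2_eq_square)
  qed
  have "FDERIV (KE m) p :> (\<lambda>h. \<Sum>i\<in>UNIV. h$i * (p$i / m$i))"
    unfolding KE_def[abs_def] by (rule has_derivative_sum) (use t in auto)
  then show ?thesis unfolding gderiv_def by (simp add: inner_vec_def vel_def)
qed

lemma KE_nonneg: assumes "\<forall>i. m$i > 0" shows "0 \<le> KE m p"
  unfolding KE_def using assms by (intro sum_nonneg divide_nonneg_pos) auto

lemma KE_comp: assumes "\<forall>i. m$i > 0" shows "\<bar>p$i\<bar> \<le> 1 + 2 * m$i * KE m p"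
proof -
  have "(p$i)^2 / (2 * m$i) \<le> KE m p" unfolding KE_def using assms
    by (intro member_le_sum divide_nonneg_pos) auto
  hence "(p$i)^2 \<le> 2 * m$i * KE m p" using assms by (simp add: field_simps)
  moreover have "\<bar>p$i\<bar> \<le> 1 + (p$i)^2"
  proof -
    have "0 \<le> (\<bar>p$i\<bar> - 1)^2" by simp
    hence "2 * \<bar>p$i\<bar> \<le> \<bar>p$i\<bar>^2 + 1" by (simp add: power2_diff)
    moreover have "\<bar>p$i\<bar>^2 = (p$i)^2" by simp
    moreover have "0 \<le> (p$i)^2" by simp
    ultimately show ?thesis by linarith
  qed
  ultimately show ?thesis by linarith
qed

lemma KE_norm: assumes "\<forall>i. m$i > 0" shows "norm p \<le> (\<Sum>i\<in>UNIV. 1 + 2 * m$i * KE m p)"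
proof -
  have "norm p \<le> (\<Sum>i\<in>UNIV. \<bar>p$i\<bar>)" by (rule norm_le_l1_cart)
  also have "\<dots> \<le> (\<Sum>i\<in>UNIV. 1 + 2 * m$i * KE m p)" by (rule sum_mono) (rule KE_comp[OF assms])
  finally show ?thesis .
qed

lemma W_hfun: "Wpot a12 a13 a23 b12 b13 b23 a b q =
   hfun a12 b12 a b \<bar>q$1 - q$2\<bar> + hfun a13 b13 a b \<bar>q$1 - q$3\<bar> + hfun a23 b23 a b \<bar>q$2 - q$3\<bar>"
  unfolding Wpot_def pair_pot_def hfun_def by (simp only: minus_divide_left[symmetric])

lemma energy_const:
  assumes m: "\<forall>i. m$i > 0" and I: "convex I"
    and sol: "is_solution m (Wpot a12 a13 a23 b12 b13 b23 a b) I q p"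
  shows "\<exists>E. \<forall>t\<in>I. KE m (p t) + Wpot a12 a13 a23 b12 b13 b23 a b (q t) = E"
proof (rule has_derivative_zero_constant[OF I, of "\<lambda>t. KE m (p t) + Wpot a12 a13 a23 b12 b13 b23 a b (q t)"])
  fix t assume t: "t \<in> I"
  let ?W = "Wpot a12 a13 a23 b12 b13 b23 a b"
  let ?G = "GW a12 a13 a23 b12 b13 b23 a b"
  have all3: "q t \<notin> collision_set \<and> (q has_vector_derivative vel m (p t)) (at t within I) \<and>
        (p has_vector_derivative (- grad ?W (q t))) (at t within I)"
    using sol t unfolding is_solution_def vel_def by blast
  hence nc: "q t \<notin> collision_set" and dq: "(q has_vector_derivative vel m (p t)) (at t within I)"
    by auto
  have dp: "(p has_vector_derivative (- ?G (q t))) (at t within I)"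
    using all3 grad_W[OF nc] by simp
  have d1: "((\<lambda>t. KE m (p t)) has_derivative (\<lambda>h. inner (h *\<^sub>R (- ?G (q t))) (vel m (p t)))) (at t within I)"
    using has_derivative_compose[OF dp[unfolded has_vector_derivative_def] gderiv_KE[OF m, unfolded gderiv_def]] .
  have d2: "((\<lambda>t. ?W (q t)) has_derivative (\<lambda>h. inner (h *\<^sub>R vel m (p t)) (?G (q t)))) (at t within I)"
    using has_derivative_compose[OF dq[unfolded has_vector_derivative_def] gderiv_W[OF nc, unfolded gderiv_def]] .
  have eq: "(\<lambda>h. inner (h *\<^sub>R (- ?G (q t))) (vel m (p t)) + inner (h *\<^sub>R vel m (p t)) (?G (q t))) = (\<lambda>h. 0)"
  proof
    fix h :: real
    have "inner (h *\<^sub>R (- ?G (q t))) (vel m (p t)) + inner (h *\<^sub>R vel m (p t)) (?G (q t))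
        = h * (- inner (?G (q t)) (vel m (p t))) + h * inner (vel m (p t)) (?G (q t))"
      by (simp only: inner_scaleR_left inner_minus_left)
    also have "inner (vel m (p t)) (?G (q t)) = inner (?G (q t)) (vel m (p t))" by (rule inner_commute)
    finally show "inner (h *\<^sub>R (- ?G (q t))) (vel m (p t)) + inner (h *\<^sub>R vel m (p t)) (?G (q t)) = 0"
      by (simp only: mult_minus_right add.left_inverse)
  qed
  show "((\<lambda>t. KE m (p t) + ?W (q t)) has_derivative (\<lambda>h. 0)) (at t within I)"
    using has_derivative_add[OF d1 d2] unfolding eq .
qed



definition VF :: "real^3 \<Rightarrow> (real^3 \<Rightarrow> real^3) \<Rightarrow> (real^3) \<times> (real^3) \<Rightarrow> (real^3) \<times> (real^3)" where
  "VF m G s = (vel m (snd s), - G (fst s))"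

lemma norm_fst_le': "norm (fst s) \<le> norm s" by (metis norm_fst_le prod.collapse)
lemma norm_snd_le': "norm (snd s) \<le> norm s" by (metis norm_snd_le prod.collapse)

lemma ivp_deriv:
  fixes z :: "real \<Rightarrow> 'a::banach"
  assumes c: "continuous_on {a..b} (\<lambda>t. F (z t))"
    and eq: "\<forall>t\<in>{a..b}. z t = z0 + integral {a..t} (\<lambda>u. F (z u))" and t: "t \<in> {a..b}"
  shows "(z has_vector_derivative F (z t)) (at t within {a..b})"
proof -
  have d: "((\<lambda>u. z0 + integral {a..u} (\<lambda>u. F (z u))) has_vector_derivative F (z t)) (at t within {a..b})"
    using has_vector_derivative_add[OF has_vector_derivative_const integral_has_vector_derivative[OF c t]] by simp
  show ?thesis by (rule has_vector_derivative_transform[OF t _ d]) (use eq in blast)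
qed

lemma Rg_closed: "closed (Rg dl)"
  unfolding Rg_def by (intro closed_Collect_conj closed_Collect_le continuous_intros)

lemma SR_closed: "closed {s::(real^3)\<times>(real^3). fst s \<in> Rg dl}"
proof -
  have "closed (fst -` Rg dl :: ((real^3)\<times>(real^3)) set)" by (rule closed_vimage_fst[OF Rg_closed])
  moreover have "fst -` Rg dl = {s::(real^3)\<times>(real^3). fst s \<in> Rg dl}" by (simp add: vimage_def)
  ultimately show ?thesis by simp
qed

lemma Rg_mono: "dl' \<le> dl \<Longrightarrow> q \<in> Rg dl \<Longrightarrow> q \<in> Rg dl'"
  by (auto simp: Rg_def)

lemma Rg_nc: "dl > 0 \<Longrightarrow> q \<in> Rg dl \<Longrightarrow> q \<notin> collision_set"
  by (auto simp: Rg_def collision_set_def)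

lemma Rg_near:
  assumes "q \<in> Rg dl" "norm (q' - q) \<le> dl/4"
  shows "q' \<in> Rg (dl/2)"
proof -
  have c: "\<bar>q'$i - q$i\<bar> \<le> dl/4" for i
    using component_le_norm_cart[of "q' - q" i] assms(2) by simp
  have "dl/2 \<le> \<bar>q'$i - q'$j\<bar>" if "dl \<le> \<bar>q$i - q$j\<bar>" for i j
    using c[of i] c[of j] that by linarith
  then show ?thesis using assms(1) unfolding Rg_def by auto
qed

lemma GW_lip:
  assumes c: "a12 > 0" "a13 > 0" "a23 > 0" "b12 > 0" "b13 > 0" "b23 > 0"
    and ab: "0 < a" "a < b" and dl: "dl > 0"
  shows "\<exists>L\<ge>0. \<forall>q\<in>Rg dl. \<forall>q'\<in>Rg dl. norm (GW a12 a13 a23 b12 b13 b23 a b q - GW a12 a13 a23 b12 b13 b23 a b q') \<le> L * norm (q - q')"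
proof -
  define La where "La = 4 * a * (a12+a13+a23) * ((a+1) * dl powr (-(a+2)))"
  define Lb where "Lb = 4 * b * (b12+b13+b23) * ((b+1) * dl powr (-(b+2)))"
  have b0: "b > 0" using ab by simp
  have La: "La \<ge> 0" "Lb \<ge> 0" using c ab unfolding La_def Lb_def by simp_all
  show ?thesis
  proof (intro exI[of _ "La + Lb"] conjI ballI)
    show "0 \<le> La + Lb" using La by simp
    fix q q' assume q: "q \<in> Rg dl" and q': "q' \<in> Rg dl"
    have "GW a12 a13 a23 b12 b13 b23 a b q - GW a12 a13 a23 b12 b13 b23 a b q'
       = - (GPP a12 a13 a23 a q - GPP a12 a13 a23 a q') + (GPP b12 b13 b23 b q - GPP b12 b13 b23 b q')"
      by (simp add: GW_def algebra_simps)
    also have "norm \<dots> \<le> norm (GPP a12 a13 a23 a q - GPP a12 a13 a23 a q') + norm (GPP b12 b13 b23 b q - GPP b12 b13 b23 b q')"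
      by (metis norm_minus_cancel norm_triangle_ineq)
    also have "\<dots> \<le> La * norm (q - q') + Lb * norm (q - q')"
      unfolding La_def Lb_def
      by (intro add_mono GPP_lip ab(1) b0 dl q q') (use c in auto)
    finally show "norm (GW a12 a13 a23 b12 b13 b23 a b q - GW a12 a13 a23 b12 b13 b23 a b q') \<le> (La + Lb) * norm (q - q')"
      by (simp add: distrib_right)
  qed
qed

lemma GW_bound:
  assumes c: "a12 > 0" "a13 > 0" "a23 > 0" "b12 > 0" "b13 > 0" "b23 > 0"
    and ab: "0 < a" "a < b" and dl: "dl > 0"
  shows "\<exists>B. \<forall>q\<in>Rg dl. norm (GW a12 a13 a23 b12 b13 b23 a b q) \<le> B"
proof -
  have b0: "b > 0" using ab by simp
  show ?thesis
  proof (intro exI ballI)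
    fix q assume q: "q \<in> Rg dl"
    have "norm (GW a12 a13 a23 b12 b13 b23 a b q) \<le> norm (GPP a12 a13 a23 a q) + norm (GPP b12 b13 b23 b q)"
      unfolding GW_def by (metis norm_minus_cancel norm_triangle_ineq)
    also have "\<dots> \<le> 2 * a * (a12+a13+a23) * dl powr (-(a+1)) + 2 * b * (b12+b13+b23) * dl powr (-(b+1))"
      by (intro add_mono GPP_bound ab(1) b0 dl q) (use c in auto)
    finally show "norm (GW a12 a13 a23 b12 b13 b23 a b q) \<le> 2 * a * (a12+a13+a23) * dl powr (-(a+1)) + 2 * b * (b12+b13+b23) * dl powr (-(b+1))" .
  qed
qed

lemma VF_lip:
  assumes m: "\<forall>i. m$i > 0" and L: "L \<ge> 0"
    and G: "\<forall>q\<in>R. \<forall>q'\<in>R. norm (G q - G q') \<le> L * norm (q - q')"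
    and s: "fst s \<in> R" and s': "fst s' \<in> R"
  shows "norm (VF m G s - VF m G s') \<le> ((\<Sum>i\<in>UNIV. 1 / m$i) + L) * norm (s - s')"
proof -
  define Cm where "Cm = (\<Sum>i\<in>UNIV. 1 / m$i)"
  have Cm: "0 \<le> Cm" unfolding Cm_def using m by (intro sum_nonneg) (simp add: less_imp_le)
  have "VF m G s - VF m G s' = (vel m (snd (s - s')), - (G (fst s) - G (fst s')))"
    by (simp add: VF_def vel_diff)
  hence "norm (VF m G s - VF m G s') \<le> norm (vel m (snd (s - s'))) + norm (- (G (fst s) - G (fst s')))"
    by (simp only: norm_Pair_le)
  also have "norm (- (G (fst s) - G (fst s'))) = norm (G (fst s) - G (fst s'))" by (rule norm_minus_cancel)
  also have "norm (G (fst s) - G (fst s')) \<le> L * norm (fst s - fst s')" using G s s' by blast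
  also have "L * norm (fst s - fst s') \<le> L * norm (s - s')"
    using norm_fst_le'[of "s - s'"] L by (simp add: mult_left_mono)
  also have "norm (vel m (snd (s - s'))) \<le> Cm * norm (snd (s - s'))" unfolding Cm_def by (rule vel_bound[OF m])
  also have "Cm * norm (snd (s - s')) \<le> Cm * norm (s - s')"
    using norm_snd_le'[of "s - s'"] Cm by (simp add: mult_left_mono)
  finally show ?thesis unfolding Cm_def by (simp add: distrib_right)
qed



lemma forward:
  fixes m :: "real^3" and a12 a13 a23 b12 b13 b23 a b :: real
  assumes m: "\<forall>i. m$i > 0"
    and c: "a12 > 0" "a13 > 0" "a23 > 0" "b12 > 0" "b13 > 0" "b23 > 0"
    and ab: "0 < a" "a < b"
    and T: "T > 0" and sol: "is_solution m (Wpot a12 a13 a23 b12 b13 b23 a b) {0..<T} q p"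
  shows "\<exists>T' q' p'. T' > T \<and> is_solution m (Wpot a12 a13 a23 b12 b13 b23 a b) {0..<T'} q' p' \<and>
           (\<forall>t\<in>{0..<T}. q' t = q t \<and> p' t = p t)"
proof -
  define W where "W = Wpot a12 a13 a23 b12 b13 b23 a b"
  define G where "G = GW a12 a13 a23 b12 b13 b23 a b"
  define f where "f = VF m G"
  define Cm where "Cm = (\<Sum>i\<in>UNIV. 1 / m$i)"
  have Cm: "0 \<le> Cm" unfolding Cm_def using m by (intro sum_nonneg) (simp add: less_imp_le)
  note sol' = sol[folded W_def]
  \<comment> \<open>Step A: a priori bounds from energy\<close>
  obtain E where E: "\<And>t. t \<in> {0..<T} \<Longrightarrow> KE m (p t) + W (q t) = E"
    using energy_const[OF m _ sol] unfolding W_def by blast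
  obtain K12 where K12: "\<And>r. r > 0 \<Longrightarrow> -K12 \<le> hfun a12 b12 a b r" using hfun_lower[OF ab c(1) c(4)] by blast
  obtain K13 where K13: "\<And>r. r > 0 \<Longrightarrow> -K13 \<le> hfun a13 b13 a b r" using hfun_lower[OF ab c(2) c(5)] by blast
  obtain K23 where K23: "\<And>r. r > 0 \<Longrightarrow> -K23 \<le> hfun a23 b23 a b r" using hfun_lower[OF ab c(3) c(6)] by blast
  obtain d12 where d12: "d12 > 0" "\<And>r. r > 0 \<Longrightarrow> hfun a12 b12 a b r \<le> E + K13 + K23 \<Longrightarrow> d12 \<le> r"
    using hfun_gap[OF ab c(1) c(4), of "E + K13 + K23"] by blast
  obtain d13 where d13: "d13 > 0" "\<And>r. r > 0 \<Longrightarrow> hfun a13 b13 a b r \<le> E + K12 + K23 \<Longrightarrow> d13 \<le> r"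
    using hfun_gap[OF ab c(2) c(5), of "E + K12 + K23"] by blast
  obtain d23 where d23: "d23 > 0" "\<And>r. r > 0 \<Longrightarrow> hfun a23 b23 a b r \<le> E + K12 + K13 \<Longrightarrow> d23 \<le> r"
    using hfun_gap[OF ab c(3) c(6), of "E + K12 + K13"] by blast
  define dl where "dl = min d12 (min d13 d23)"
  have dl: "dl > 0" unfolding dl_def using d12(1) d13(1) d23(1) by simp
  define Kmax where "Kmax = E + K12 + K13 + K23"
  have solt: "q t \<notin> collision_set" "(q has_vector_derivative vel m (p t)) (at t within {0..<T})"
     "(p has_vector_derivative - G (q t)) (at t within {0..<T})" if t: "t \<in> {0..<T}" for t
  proof -
    have all3: "q t \<notin> collision_set \<and> (q has_vector_derivative vel m (p t)) (at t within {0..<T}) \<and>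
        (p has_vector_derivative (- grad W (q t))) (at t within {0..<T})"
      using sol' t unfolding is_solution_def vel_def by blast
    then show "q t \<notin> collision_set" "(q has_vector_derivative vel m (p t)) (at t within {0..<T})" by auto
    have "grad W (q t) = G (q t)" unfolding W_def G_def using all3 grad_W by blast
    then show "(p has_vector_derivative - G (q t)) (at t within {0..<T})" using all3 by simp
  qed
  have bnds: "q t \<in> Rg dl \<and> KE m (p t) \<le> Kmax" if t: "t \<in> {0..<T}" for t
  proof -
    have nc: "q t \<notin> collision_set" using solt[OF t] by simp
    have pos: "\<bar>q t$1 - q t$2\<bar> > 0" "\<bar>q t$1 - q t$3\<bar> > 0" "\<bar>q t$2 - q t$3\<bar> > 0"
      using nc by (auto simp: collision_set_def)
    have eq: "KE m (p t) + hfun a12 b12 a b \<bar>q t$1 - q t$2\<bar> + hfun a13 b13 a b \<bar>q t$1 - q t$3\<bar>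
        + hfun a23 b23 a b \<bar>q t$2 - q t$3\<bar> = E"
      using E[OF t] unfolding W_def W_hfun by simp
    have ke: "0 \<le> KE m (p t)" by (rule KE_nonneg[OF m])
    note l12 = K12[OF pos(1)] and l13 = K13[OF pos(2)] and l23 = K23[OF pos(3)]
    have "d12 \<le> \<bar>q t$1 - q t$2\<bar>" using d12(2)[OF pos(1)] eq ke l13 l23 by linarith
    moreover have "d13 \<le> \<bar>q t$1 - q t$3\<bar>" using d13(2)[OF pos(2)] eq ke l12 l23 by linarith
    moreover have "d23 \<le> \<bar>q t$2 - q t$3\<bar>" using d23(2)[OF pos(3)] eq ke l12 l13 by linarith
    ultimately have "q t \<in> Rg dl" unfolding Rg_def dl_def by auto
    moreover have "KE m (p t) \<le> Kmax" unfolding Kmax_def using eq l12 l13 l23 by linarith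
    ultimately show ?thesis by simp
  qed
  \<comment> \<open>Step B: Lipschitz bound and continuous extension to T\<close>
  define s where "s t = (q t, p t)" for t
  define P where "P = (\<Sum>i\<in>UNIV. 1 + 2 * m$i * Kmax)"
  obtain BG where BG: "\<And>x. x \<in> Rg dl \<Longrightarrow> norm (G x) \<le> BG"
    using GW_bound[OF c ab dl] unfolding G_def by blast
  define B where "B = Cm * P + BG"
  have ds: "(s has_vector_derivative f (s t)) (at t within {0..<T})" if t: "t \<in> {0..<T}" for t
  proof -
    have "((\<lambda>t. (q t, p t)) has_vector_derivative (vel m (p t), - G (q t))) (at t within {0..<T})"
      by (intro has_vector_derivative_Pair solt[OF t])
    then show ?thesis unfolding s_def[abs_def] f_def VF_def by simp
  qed
  have fb: "norm (f (s t)) \<le> B" if t: "t \<in> {0..<T}" for t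
  proof -
    have pb: "norm (p t) \<le> P"
    proof -
      have "norm (p t) \<le> (\<Sum>i\<in>UNIV. 1 + 2 * m$i * KE m (p t))" by (rule KE_norm[OF m])
      also have "\<dots> \<le> P" unfolding P_def
      proof (rule sum_mono)
        fix i show "1 + 2 * m$i * KE m (p t) \<le> 1 + 2 * m$i * Kmax"
          using bnds[OF t] m by (simp add: less_imp_le)
      qed
      finally show ?thesis .
    qed
    have "norm (f (s t)) \<le> norm (vel m (p t)) + norm (- G (q t))"
      unfolding f_def VF_def s_def by (simp only: fst_conv snd_conv norm_Pair_le)
    moreover have "norm (- G (q t)) = norm (G (q t))" by (rule norm_minus_cancel)
    moreover have "norm (G (q t)) \<le> BG" using BG bnds[OF t] by blast
    moreover have "norm (vel m (p t)) \<le> Cm * norm (p t)" unfolding Cm_def by (rule vel_bound[OF m])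
    moreover have "Cm * norm (p t) \<le> Cm * P" using pb Cm by (rule mult_left_mono)
    ultimately show ?thesis unfolding B_def by linarith
  qed
  have B0: "0 \<le> B"
  proof -
    have "norm (f (s 0)) \<le> B" using fb T by simp
    moreover have "0 \<le> norm (f (s 0))" by (rule norm_ge_zero)
    ultimately show ?thesis by linarith
  qed
  have slip: "norm (s x - s y) \<le> B * norm (x - y)" if "x \<in> {0..<T}" "y \<in> {0..<T}" for x y
  proof (rule differentiable_bound[where f'="\<lambda>t h. h *\<^sub>R f (s t)", OF convex_real_interval(7) _ _ that])
    fix t assume t: "t \<in> {0..<T}"
    show "(s has_derivative (\<lambda>h. h *\<^sub>R f (s t))) (at t within {0..<T})"
      using ds[OF t] unfolding has_vector_derivative_def .
    have "onorm (\<lambda>h::real. h *\<^sub>R f (s t)) = onorm (\<lambda>h::real. h) * norm (f (s t))"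
      by (rule onorm_scaleR_left[OF bounded_linear_ident])
    also have "\<dots> = norm (f (s t))" by (simp add: onorm_id)
    finally show "onorm (\<lambda>h. h *\<^sub>R f (s t)) \<le> B" using fb[OF t] by simp
  qed
  have "B-lipschitz_on {0..<T} s"
    by (rule lipschitz_onI) (use slip B0 in \<open>auto simp: dist_norm\<close>)
  hence uc: "uniformly_continuous_on {0..<T} s" by (rule lipschitz_on_uniformly_continuous)
  obtain g where g: "uniformly_continuous_on {0..T} g" "\<And>t. t \<in> {0..<T} \<Longrightarrow> s t = g t"
    using uniformly_continuous_on_extension_on_closure[OF uc] T by (metis closure_atLeastLessThan)
  have gc: "continuous_on {0..T} g" using g(1) by (rule uniformly_continuous_imp_continuous)
  have gR: "fst (g t) \<in> Rg dl" if t: "t \<in> {0..T}" for t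
  proof -
    have "g ` {0..<T} \<subseteq> {x. fst x \<in> Rg dl}"
    proof
      fix y assume "y \<in> g ` {0..<T}"
      then obtain t where t: "t \<in> {0..<T}" "y = g t" by blast
      then have "y = (q t, p t)" using g(2)[OF t(1)] s_def by simp
      then show "y \<in> {x. fst x \<in> Rg dl}" using bnds[OF t(1)] by simp
    qed
    moreover have "continuous_on (closure {0..<T}) g" using gc T by simp
    ultimately have "g ` closure {0..<T} \<subseteq> {x. fst x \<in> Rg dl}"
      using image_closure_subset[OF _ SR_closed] by blast
    hence sub: "g ` {0..T} \<subseteq> {x. fst x \<in> Rg dl}" using T by simp
    have "g t \<in> g ` {0..T}" using t by (rule imageI)
    then have "g t \<in> {x. fst x \<in> Rg dl}" using sub by (rule subsetD[rotated])
    then show ?thesis by simp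
  qed
  have dl2: "dl/2 > 0" using dl by simp
  obtain L1 where L1: "L1 \<ge> 0" "\<forall>x\<in>Rg (dl/2). \<forall>x'\<in>Rg (dl/2). norm (G x - G x') \<le> L1 * norm (x - x')"
    using GW_lip[OF c ab dl2] unfolding G_def by blast
  define Lf where "Lf = Cm + L1"
  have Lf0: "0 \<le> Lf" using Cm L1(1) by (simp add: Lf_def)
  have flip: "norm (f x - f y) \<le> Lf * norm (x - y)" if "fst x \<in> Rg (dl/2)" "fst y \<in> Rg (dl/2)" for x y
    unfolding f_def Lf_def Cm_def by (rule VF_lip[OF m L1(1) L1(2) that])
  have fcont: "continuous_on {x::(real^3)\<times>(real^3). fst x \<in> Rg (dl/2)} f"
  proof -
    have "Lf-lipschitz_on {x::(real^3)\<times>(real^3). fst x \<in> Rg (dl/2)} f"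
    proof (rule lipschitz_onI)
      fix x y assume "x \<in> {x::(real^3)\<times>(real^3). fst x \<in> Rg (dl/2)}" "y \<in> {x::(real^3)\<times>(real^3). fst x \<in> Rg (dl/2)}"
      then show "dist (f x) (f y) \<le> Lf * dist x y" using flip by (simp add: dist_norm)
    qed (rule Lf0)
    then show ?thesis by (rule lipschitz_on_continuous_on)
  qed
  have gR2: "fst (g t) \<in> Rg (dl/2)" if "t \<in> {0..T}" for t
    using Rg_mono[OF _ gR[OF that], of "dl/2"] dl by simp
  have fgc: "continuous_on {0..T} (\<lambda>t. f (g t))"
    by (rule continuous_on_compose2[OF fcont gc]) (use gR2 in blast)
  have grep_lt: "g t = g 0 + integral {0..t} (\<lambda>u. f (g u))" if t: "t \<in> {0..<T}" for t
  proof -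
    have d: "(g has_vector_derivative f (g x)) (at x within {0..t})" if x: "x \<in> {0..t}" for x
    proof -
      have xT: "x \<in> {0..<T}" using x t by simp
      have sub: "{0..t} \<subseteq> {0..<T}" using t by (simp add: subset_iff)
      have "(s has_vector_derivative f (s x)) (at x within {0..t})"
        by (rule has_vector_derivative_within_subset[OF ds[OF xT] sub])
      moreover have "g y = s y" if y: "y \<in> {0..t}" for y
      proof -
        have "y \<in> {0..<T}" using y sub by (rule subsetD[rotated])
        then show ?thesis using g(2) by metis
      qed
      ultimately have "(g has_vector_derivative f (s x)) (at x within {0..t})"
        using has_vector_derivative_transform[OF x] by metis
      then show ?thesis using g(2)[OF xT] by simp
    qed
    have "((\<lambda>u. f (g u)) has_integral (g t - g 0)) {0..t}"
    proof (rule fundamental_theorem_of_calculus)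
      show "0 \<le> t" using t by simp
      fix x assume "x \<in> {0..t}" then show "(g has_vector_derivative f (g x)) (at x within {0..t})" by (rule d)
    qed
    then show ?thesis by (simp add: integral_unique)
  qed
  have grep: "g t = g 0 + integral {0..t} (\<lambda>u. f (g u))" if t: "t \<in> {0..T}" for t
  proof -
    define phi where "phi t = g t - (g 0 + integral {0..t} (\<lambda>u. f (g u)))" for t
    have ic: "continuous_on {0..T} (\<lambda>t. integral {0..t} (\<lambda>u. f (g u)))"
      using integral_has_vector_derivative[OF fgc]
      by (meson has_vector_derivative_continuous continuous_on_eq_continuous_within)
    have cl: "closure {0..<T} = {0..T}" using T by simp
    have pc: "continuous_on (closure {0..<T}) phi" unfolding cl phi_def
      by (intro continuous_on_diff continuous_on_add continuous_on_const gc ic)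
    have "phi ` {0..<T} \<subseteq> {0}"
    proof
      fix y assume "y \<in> phi ` {0..<T}"
      then obtain u where u: "u \<in> {0..<T}" "y = phi u" by blast
      then show "y \<in> {0}" unfolding phi_def using grep_lt[OF u(1)] by simp
    qed
    hence "phi ` closure {0..<T} \<subseteq> {0}" by (rule image_closure_subset[OF pc closed_singleton])
    hence "phi ` {0..T} \<subseteq> {0}" unfolding cl .
    moreover have "phi t \<in> phi ` {0..T}" using t by (rule imageI)
    ultimately have "phi t = 0" by blast
    then show ?thesis unfolding phi_def by simp
  qed
  define x0 where "x0 = g T"
  define r where "r = dl/4"
  have r: "r > 0" using dl by (simp add: r_def)
  define K where "K = cball x0 r"
  have TT: "T \<in> {0..T}" using T by simp
  have Kin: "fst y \<in> Rg (dl/2)" if y: "y \<in> K" for y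
  proof -
    have "norm (fst y - fst x0) \<le> norm (y - x0)" using norm_fst_le'[of "y - x0"] by simp
    also have "\<dots> \<le> r" using y by (simp add: K_def dist_norm norm_minus_commute)
    finally have "norm (fst y - fst x0) \<le> dl/4" by (simp add: r_def)
    then show ?thesis using Rg_near[OF gR[OF TT]] unfolding x0_def by blast
  qed
  obtain BG2 where BG2: "\<And>x. x \<in> Rg (dl/2) \<Longrightarrow> norm (G x) \<le> BG2"
    using GW_bound[OF c ab dl2] unfolding G_def by blast
  define Bf where "Bf = Cm * (norm x0 + r) + BG2"
  have fbK: "norm (f y) \<le> Bf" if y: "y \<in> K" for y
  proof -
    have n1: "norm (f y) \<le> norm (vel m (snd y)) + norm (- G (fst y))"
      unfolding f_def VF_def by (simp only: fst_conv snd_conv norm_Pair_le)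
    have n2: "norm (- G (fst y)) = norm (G (fst y))" by (rule norm_minus_cancel)
    have n3: "norm (G (fst y)) \<le> BG2" using BG2 Kin[OF y] by blast
    have n4: "norm (vel m (snd y)) \<le> Cm * norm (snd y)" unfolding Cm_def by (rule vel_bound[OF m])
    have "norm y - norm x0 \<le> norm (y - x0)" by (rule norm_triangle_ineq2)
    moreover have "norm (y - x0) \<le> r" using y by (simp add: K_def dist_norm norm_minus_commute)
    ultimately have "norm (snd y) \<le> norm x0 + r" using norm_snd_le'[of y] by linarith
    hence n5: "Cm * norm (snd y) \<le> Cm * (norm x0 + r)" using Cm by (rule mult_left_mono)
    show ?thesis unfolding Bf_def using n1 n2 n3 n4 n5 by linarith
  qed
  have Kc: "closed K" "K \<noteq> {}" "convex K" using r by (auto simp: K_def)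
  define cp where "cp = closest_point K"
  have cpK: "cp x \<in> K" for x unfolding cp_def by (rule closest_point_in_set[OF Kc(1) Kc(2)])
  have cplip: "norm (cp x - cp y) \<le> norm (x - y)" for x y
    using closest_point_lipschitz[OF Kc(3) Kc(1) Kc(2), of x y] unfolding cp_def dist_norm .
  define gg where "gg x = f (cp x)" for x
  have gglip: "norm (gg x - gg y) \<le> Lf * norm (x - y)" for x y
  proof -
    have "norm (gg x - gg y) \<le> Lf * norm (cp x - cp y)" unfolding gg_def by (rule flip[OF Kin[OF cpK] Kin[OF cpK]])
    also have "\<dots> \<le> Lf * norm (x - y)" using cplip Lf0 by (rule mult_left_mono)
    finally show ?thesis .
  qed
  have ggb: "norm (gg x) \<le> Bf" for x unfolding gg_def by (rule fbK[OF cpK])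
  have Bf0: "0 \<le> Bf" using ggb[of 0] norm_ge_zero[of "gg 0"] by linarith
  have ggc: "continuous_on UNIV gg"
  proof -
    have "Lf-lipschitz_on UNIV gg"
    proof (rule lipschitz_onI)
      fix x y :: "(real^3)\<times>(real^3)"
      show "dist (gg x) (gg y) \<le> Lf * dist x y" using gglip by (simp add: dist_norm)
    qed (rule Lf0)
    then show ?thesis by (rule lipschitz_on_continuous_on)
  qed
  define h where "h = min (1 / (2 * (Lf + 1))) (r / (Bf + 1))"
  have h0: "h > 0" unfolding h_def using Lf0 Bf0 r by simp
  have hL: "h * Lf < 1"
  proof -
    have "h * Lf \<le> (1 / (2 * (Lf + 1))) * Lf" unfolding h_def using Lf0 by (intro mult_right_mono) auto
    also have "\<dots> < 1" using Lf0 by (simp add: field_simps)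
    finally show ?thesis .
  qed
  have hB: "h * Bf \<le> r"
  proof -
    have "h * Bf \<le> (r / (Bf + 1)) * Bf" unfolding h_def using Bf0 by (intro mult_right_mono) auto
    also have "\<dots> \<le> r" using Bf0 r by (simp add: field_simps)
    finally show ?thesis .
  qed
  obtain y where yc: "continuous_on {T..T+h} y"
      and yeq0: "\<forall>t\<in>{T..T+h}. y t = x0 + integral {T..t} (\<lambda>s. gg (y s))"
    using picard_global[OF gglip ggb h0 hL Lf0] by blast
  have yK: "y t \<in> K" if t: "t \<in> {T..T+h}" for t
  proof -
    have sub: "{T..t} \<subseteq> {T..T+h}" using t by (simp add: subset_iff)
    have cc: "continuous_on {T..t} (\<lambda>s. gg (y s))"
      by (rule continuous_on_compose2[OF ggc continuous_on_subset[OF yc sub]]) simp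
    have int: "((\<lambda>s. gg (y s)) has_integral integral {T..t} (\<lambda>s. gg (y s))) (cbox T t)"
      using integrable_continuous_real[OF cc] by (simp add: integrable_integral)
    have "norm (integral {T..t} (\<lambda>s. gg (y s))) \<le> Bf * Henstock_Kurzweil_Integration.content (cbox T t)"
      by (rule has_integral_bound[OF Bf0 int]) (rule ggb)
    also have "Henstock_Kurzweil_Integration.content (cbox T t) = t - T" using t by simp
    also have "Bf * (t - T) \<le> Bf * h" using t Bf0 by (intro mult_left_mono) auto
    also have "\<dots> \<le> r" using hB by (simp add: mult.commute)
    finally have "norm (y t - x0) \<le> r" using yeq0 t by simp
    then show ?thesis by (simp add: K_def dist_norm norm_minus_commute)
  qed
  have yeq: "y t = x0 + integral {T..t} (\<lambda>u. f (y u))" if t: "t \<in> {T..T+h}" for t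
  proof -
    have "integral {T..t} (\<lambda>s. gg (y s)) = integral {T..t} (\<lambda>u. f (y u))"
    proof (rule integral_cong)
      fix u assume "u \<in> {T..t}"
      hence "u \<in> {T..T+h}" using t by simp
      then show "gg (y u) = f (y u)" unfolding gg_def cp_def using closest_point_self[OF yK] by metis
    qed
    then show ?thesis using yeq0 t by simp
  qed
  have yT: "y T = x0" using yeq0 h0 by simp
  have yR: "fst (y t) \<in> Rg (dl/2)" if "t \<in> {T..T+h}" for t using Kin[OF yK[OF that]] .
  have fyc: "continuous_on {T..T+h} (\<lambda>t. f (y t))"
    by (rule continuous_on_compose2[OF fcont yc]) (use yR in blast)
  define z where "z t = (if t \<le> T then g t else y t)" for t
  have zg: "z t = g t" if "t \<le> T" for t using that by (simp add: z_def)
  have zy: "z t = y t" if "t \<in> {T..T+h}" for t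
  proof (cases "t \<le> T")
    case True
    hence "t = T" using that by simp
    then show ?thesis using yT by (simp add: z_def x0_def)
  next
    case False then show ?thesis by (simp add: z_def)
  qed
  have zR: "fst (z t) \<in> Rg (dl/2)" if t: "t \<in> {0..T+h}" for t
  proof (cases "t \<le> T")
    case True then show ?thesis using zg gR2 t by simp
  next
    case False
    hence "t \<in> {T..T+h}" using t by simp
    then show ?thesis using zy yR by simp
  qed
  have zc: "continuous_on {0..T+h} z"
  proof -
    have e1: "{t \<in> {0..T+h}. t \<le> T} = {0..T}" using h0 by auto
    have e2: "{t \<in> {0..T+h}. T \<le> t} = {T..T+h}" using T by auto
    have "continuous_on {0..T+h} (\<lambda>t. if t \<le> T then g t else y t)"
    proof (rule continuous_on_cases_le)
      show "continuous_on {t \<in> {0..T+h}. t \<le> T} g" unfolding e1 by (rule gc)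
      show "continuous_on {t \<in> {0..T+h}. T \<le> t} y" unfolding e2 by (rule yc)
      show "continuous_on {0..T+h} (\<lambda>t. t)" by (rule continuous_on_id)
      fix t assume "t \<in> {0..T+h}" "t = T"
      then show "g t = y t" using yT by (simp add: x0_def)
    qed
    then show ?thesis unfolding z_def[abs_def] .
  qed
  have fzc: "continuous_on {0..T+h} (\<lambda>t. f (z t))"
    by (rule continuous_on_compose2[OF fcont zc]) (use zR in blast)
  have zeq: "\<forall>t\<in>{0..T+h}. z t = g 0 + integral {0..t} (\<lambda>u. f (z u))"
  proof
    fix t assume t: "t \<in> {0..T+h}"
    show "z t = g 0 + integral {0..t} (\<lambda>u. f (z u))"
    proof (cases "t \<le> T")
      case True
      have "integral {0..t} (\<lambda>u. f (z u)) = integral {0..t} (\<lambda>u. f (g u))"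
        by (rule integral_cong) (use True zg in simp)
      then show ?thesis using grep[of t] True t zg[OF True] by simp
    next
      case False
      have tT: "t \<in> {T..T+h}" using False t by simp
      have int: "(\<lambda>u. f (z u)) integrable_on {0..t}"
        by (rule integrable_continuous_real[OF continuous_on_subset[OF fzc]]) (use t in \<open>simp add: subset_iff\<close>)
      have "integral {0..T} (\<lambda>u. f (z u)) + integral {T..t} (\<lambda>u. f (z u)) = integral {0..t} (\<lambda>u. f (z u))"
        by (rule Henstock_Kurzweil_Integration.integral_combine) (use T False int in auto)
      moreover have "integral {0..T} (\<lambda>u. f (z u)) = integral {0..T} (\<lambda>u. f (g u))"
        by (rule integral_cong) (use zg in simp)
      moreover have "integral {T..t} (\<lambda>u. f (z u)) = integral {T..t} (\<lambda>u. f (y u))"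
      proof (rule integral_cong)
        fix u assume "u \<in> {T..t}"
        hence "u \<in> {T..T+h}" using tT by simp
        then show "f (z u) = f (y u)" using zy by simp
      qed
      moreover have "g T = g 0 + integral {0..T} (\<lambda>u. f (g u))" using grep TT by blast
      moreover have "y t = x0 + integral {T..t} (\<lambda>u. f (y u))" by (rule yeq[OF tT])
      moreover have "z t = y t" by (rule zy[OF tT])
      ultimately show ?thesis unfolding x0_def by (simp add: algebra_simps)
    qed
  qed
  have dz: "(z has_vector_derivative f (z t)) (at t within {0..T+h})" if "t \<in> {0..T+h}" for t
    by (rule ivp_deriv[OF fzc zeq that])
  define q' where "q' t = fst (z t)" for t
  define p' where "p' t = snd (z t)" for t
  have solz: "is_solution m W {0..<T+h} q' p'"
    unfolding is_solution_def
  proof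
    fix t assume t: "t \<in> {0..<T+h}"
    have t': "t \<in> {0..T+h}" using t by simp
    have sub: "{0..<T+h} \<subseteq> {0..T+h}" by auto
    have dz': "(z has_vector_derivative f (z t)) (at t within {0..<T+h})"
      by (rule has_vector_derivative_within_subset[OF dz[OF t'] sub])
    have nc: "q' t \<notin> collision_set" unfolding q'_def by (rule Rg_nc[OF dl2 zR[OF t']])
    have "(q' has_vector_derivative fst (f (z t))) (at t within {0..<T+h})"
      unfolding q'_def[abs_def] by (rule bounded_linear.has_vector_derivative[OF bounded_linear_fst dz'])
    moreover have "fst (f (z t)) = (\<chi> i. p' t $ i / m $ i)"
      unfolding f_def VF_def vel_def p'_def by simp
    moreover have "(p' has_vector_derivative snd (f (z t))) (at t within {0..<T+h})"
      unfolding p'_def[abs_def] by (rule bounded_linear.has_vector_derivative[OF bounded_linear_snd dz'])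
    moreover have "snd (f (z t)) = - grad W (q' t)"
      unfolding f_def VF_def G_def W_def q'_def using grad_W[OF nc[unfolded q'_def]] by simp
    ultimately show "q' t \<notin> collision_set \<and>
        (q' has_vector_derivative (\<chi> i. p' t $ i / m $ i)) (at t within {0..<T+h}) \<and>
        (p' has_vector_derivative - grad W (q' t)) (at t within {0..<T+h})"
      using nc by simp
  qed
  have agree: "q' t = q t \<and> p' t = p t" if t: "t \<in> {0..<T}" for t
  proof -
    have "z t = g t" using t by (intro zg) simp
    also have "g t = s t" using g(2)[OF t] by simp
    finally show ?thesis unfolding q'_def p'_def s_def by simp
  qed
  show ?thesis
    by (rule exI[of _ "T+h"], rule exI[of _ q'], rule exI[of _ p']) (use h0 solz agree in \<open>simp add: W_def\<close>)
qed

lemma reverse: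
  assumes sol: "is_solution m W I q p"
  shows "is_solution m W (uminus ` I) (\<lambda>t. q (-t)) (\<lambda>t. - p (-t))"
  unfolding is_solution_def
proof
  fix t assume t: "t \<in> uminus ` I"
  have tI: "-t \<in> I" using t by auto
  have all3: "q (-t) \<notin> collision_set \<and> (q has_vector_derivative (\<chi> i. p (-t) $ i / m $ i)) (at (-t) within I) \<and>
        (p has_vector_derivative (- grad W (q (-t)))) (at (-t) within I)"
    using sol tI unfolding is_solution_def by blast
  have im: "uminus ` (uminus ` I) = I" by (simp add: image_image)
  have du: "((\<lambda>x::real. - x) has_vector_derivative -1) (at t within uminus ` I)"
    by (rule has_vector_derivative_minus[OF has_vector_derivative_id])
  have dq: "((\<lambda>x. q (-x)) has_vector_derivative ((-1) *\<^sub>R (\<chi> i. p (-t) $ i / m $ i))) (at t within uminus ` I)"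
    using vector_diff_chain_within[OF du, of q] all3 im by (simp add: o_def)
  have dp: "((\<lambda>x. p (-x)) has_vector_derivative ((-1) *\<^sub>R (- grad W (q (-t))))) (at t within uminus ` I)"
    using vector_diff_chain_within[OF du, of p "- grad W (q (-t))"] all3 im by (simp add: o_def)
  have dp': "((\<lambda>x. - p (-x)) has_vector_derivative (- grad W (q (-t)))) (at t within uminus ` I)"
    using has_vector_derivative_minus[OF dp] by simp
  have "(-1) *\<^sub>R (\<chi> i. p (-t) $ i / m $ i) = (\<chi> i. (- p (-t)) $ i / m $ i)"
    by (simp add: vec_eq_iff)
  then show "q (-t) \<notin> collision_set \<and>
      ((\<lambda>t. q (-t)) has_vector_derivative (\<chi> i. (- p (-t)) $ i / m $ i)) (at t within uminus ` I) \<and>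
      ((\<lambda>t. - p (-t)) has_vector_derivative - grad W (q (-t))) (at t within uminus ` I)"
    using all3 dq dp' by simp
qed

lemma img1: "uminus ` {-T<..0::real} = {0..<T}"
  by (auto simp: image_iff intro!: bexI[of _ "- x" for x])

lemma img2: "uminus ` {0..<T::real} = {-T<..0}"
  by (auto simp: image_iff intro!: bexI[of _ "- x" for x])

theorem mainTheorem1:
  fixes m :: "real^3" and a12 a13 a23 b12 b13 b23 a b :: real
  assumes "\<forall>i. m $ i > 0"
    and "a12 > 0" "a13 > 0" "a23 > 0" "b12 > 0" "b13 > 0" "b23 > 0"
    and "4 < a" "a < b - 1"
  shows "(\<forall>T q p. T > 0 \<and> is_solution m (Wpot a12 a13 a23 b12 b13 b23 a b) {0..<T} q p \<longrightarrow>
            (\<exists>T' q' p'. T' > T \<and> is_solution m (Wpot a12 a13 a23 b12 b13 b23 a b) {0..<T'} q' p' \<and>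
               (\<forall>t\<in>{0..<T}. q' t = q t \<and> p' t = p t)))
       \<and> (\<forall>T q p. T > 0 \<and> is_solution m (Wpot a12 a13 a23 b12 b13 b23 a b) {-T<..0} q p \<longrightarrow>
            (\<exists>T' q' p'. T' > T \<and> is_solution m (Wpot a12 a13 a23 b12 b13 b23 a b) {-T'<..0} q' p' \<and>
               (\<forall>t\<in>{-T<..0}. q' t = q t \<and> p' t = p t)))"
proof -
  have ab: "0 < a" "a < b" using assms(8,9) by linarith+
  note fw = forward[OF assms(1-7) ab]
  show ?thesis
  proof (intro conjI allI impI; elim conjE)
    fix T q p assume "T > 0" "is_solution m (Wpot a12 a13 a23 b12 b13 b23 a b) {0..<T} q p"
    then show "\<exists>T' q' p'. T' > T \<and> is_solution m (Wpot a12 a13 a23 b12 b13 b23 a b) {0..<T'} q' p' \<and>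
               (\<forall>t\<in>{0..<T}. q' t = q t \<and> p' t = p t)" by (rule fw)
  next
    fix T q p assume T: "T > 0" and sol: "is_solution m (Wpot a12 a13 a23 b12 b13 b23 a b) {-T<..0} q p"
    have sol1: "is_solution m (Wpot a12 a13 a23 b12 b13 b23 a b) {0..<T} (\<lambda>t. q (-t)) (\<lambda>t. - p (-t))"
      using reverse[OF sol] unfolding img1 .
    obtain T' q' p' where T': "T' > T" and sol2: "is_solution m (Wpot a12 a13 a23 b12 b13 b23 a b) {0..<T'} q' p'"
      and ag: "\<forall>t\<in>{0..<T}. q' t = q (-t) \<and> p' t = - p (-t)"
      using fw[OF T sol1] by blast
    have sol3: "is_solution m (Wpot a12 a13 a23 b12 b13 b23 a b) {-T'<..0} (\<lambda>t. q' (-t)) (\<lambda>t. - p' (-t))"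
      using reverse[OF sol2] unfolding img2 .
    have ag2: "\<forall>t\<in>{-T<..0}. q' (-t) = q t \<and> - p' (-t) = p t"
    proof
      fix t assume "t \<in> {-T<..0}"
      hence "-t \<in> {0..<T}" by simp
      then show "q' (-t) = q t \<and> - p' (-t) = p t" using ag by force
    qed
    show "\<exists>T' q' p'. T' > T \<and> is_solution m (Wpot a12 a13 a23 b12 b13 b23 a b) {-T'<..0} q' p' \<and>
               (\<forall>t\<in>{-T<..0}. q' t = q t \<and> p' t = p t)"
      using T' sol3 ag2 by blast
  qed
qed


end
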